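(* $(\Sigma_m,\mathrm{Md})$ has the propagation property for pseudo units and the propagation property for pseudo zeros: for all $\Sigma_m$-terms $t,r$ and every $\Sigma_m$-context $C[\,]$, $\mathrm{Md}\vdash 1_t\cdot C[r]=1_t\cdot C[1_t\cdot r]$ and $\mathrm{Md}\vdash 0_t\cdot C[r]=0_t\cdot C[0_t\cdot r]$.
   Context: $\Sigma_m=(0,1,+,\cdot,-,{}^{-1})$; $\mathrm{Md}$ is the set of equations $(x+y)+z=x+(y+z)$, $x+y=y+x$, $x+0=x$, $x+(-x)=0$, $(x\cdot y)\cdot z=x\cdot(y\cdot z)$, $x\cdot y=y\cdot x$, $1\cdot x=x$, $x\cdot(y+z)=x\cdot y+x\cdot z$, $(x^{-1})^{-1}=x$, $x\cdot(x\cdot x^{-1})=x$. $1_t$ abbreviates $t\cdot t^{-1}$, $0_t$ abbreviates $1+(-1_t)$. A context $C[\,]$ is a term with one hole. *)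

theory Defs
  imports Main
begin

datatype trm =
    Var nat
  | Zero
  | One
  | Plus trm trm
  | Times trm trm
  | Neg trm
  | Inv trm

fun subst :: "(nat \<Rightarrow> trm) \<Rightarrow> trm \<Rightarrow> trm" where
  "subst \<sigma> (Var x) = \<sigma> x"
| "subst \<sigma> Zero = Zero"
| "subst \<sigma> One = One"
| "subst \<sigma> (Plus a b) = Plus (subst \<sigma> a) (subst \<sigma> b)"
| "subst \<sigma> (Times a b) = Times (subst \<sigma> a) (subst \<sigma> b)"
| "subst \<sigma> (Neg a) = Neg (subst \<sigma> a)"
| "subst \<sigma> (Inv a) = Inv (subst \<sigma> a)"

definition Md :: "(trm \<times> trm) set" where
  "Md = (let x = Var 0; y = Var 1; z = Var 2 in
    { (Plus (Plus x y) z, Plus x (Plus y z)),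
      (Plus x y, Plus y x),
      (Plus x Zero, x),
      (Plus x (Neg x), Zero),
      (Times (Times x y) z, Times x (Times y z)),
      (Times x y, Times y x),
      (Times One x, x),
      (Times x (Plus y z), Plus (Times x y) (Times x z)),
      (Inv (Inv x), x),
      (Times x (Times x (Inv x)), x) })"

inductive derivable :: "(trm \<times> trm) set \<Rightarrow> trm \<Rightarrow> trm \<Rightarrow> bool" for E where
  ax: "(s, t) \<in> E \<Longrightarrow> derivable E (subst \<sigma> s) (subst \<sigma> t)"
| refl: "derivable E t t"
| sym: "derivable E s t \<Longrightarrow> derivable E t s"
| trans: "derivable E s t \<Longrightarrow> derivable E t u \<Longrightarrow> derivable E s u"
| cong_plus: "derivable E s s' \<Longrightarrow> derivable E t t' \<Longrightarrow> derivable E (Plus s t) (Plus s' t')"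
| cong_times: "derivable E s s' \<Longrightarrow> derivable E t t' \<Longrightarrow> derivable E (Times s t) (Times s' t')"
| cong_neg: "derivable E s s' \<Longrightarrow> derivable E (Neg s) (Neg s')"
| cong_inv: "derivable E s s' \<Longrightarrow> derivable E (Inv s) (Inv s')"

datatype ctx =
    Hole
  | PlusL ctx trm
  | PlusR trm ctx
  | TimesL ctx trm
  | TimesR trm ctx
  | NegC ctx
  | InvC ctx

fun fill :: "ctx \<Rightarrow> trm \<Rightarrow> trm" where
  "fill Hole r = r"
| "fill (PlusL C b) r = Plus (fill C r) b"
| "fill (PlusR a C) r = Plus a (fill C r)"
| "fill (TimesL C b) r = Times (fill C r) b"
| "fill (TimesR a C) r = Times a (fill C r)"
| "fill (NegC C) r = Neg (fill C r)"
| "fill (InvC C) r = Inv (fill C r)"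

definition one_of :: "trm \<Rightarrow> trm" where
  "one_of t = Times t (Inv t)"

definition zero_of :: "trm \<Rightarrow> trm" where
  "zero_of t = Plus One (Neg (one_of t))"

end

theory Submission
  imports Defs "HOL.Real"
begin

lemma equivp_der: "equivp (derivable Md)"
  by (rule equivpI) (auto intro: reflpI sympI transpI derivable.refl derivable.sym derivable.trans)

fun ev :: "(nat \<Rightarrow> real) \<Rightarrow> trm \<Rightarrow> real" where
  "ev \<rho> (Var x) = \<rho> x"
| "ev \<rho> Zero = 0"
| "ev \<rho> One = 1"
| "ev \<rho> (Plus a b) = ev \<rho> a + ev \<rho> b"
| "ev \<rho> (Times a b) = ev \<rho> a * ev \<rho> b"
| "ev \<rho> (Neg a) = - ev \<rho> a"
| "ev \<rho> (Inv a) = inverse (ev \<rho> a)"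

lemma ev_subst: "ev \<rho> (subst \<sigma> t) = ev (\<lambda>n. ev \<rho> (\<sigma> n)) t"
  by (induction t) auto

lemma sound: "derivable Md s t \<Longrightarrow> ev \<rho> s = ev \<rho> t"
proof (induction arbitrary: \<rho> rule: derivable.induct)
  case (ax s t \<sigma>)
  then show ?case
    by (auto simp: Md_def Let_def ev_subst algebra_simps) (metis right_inverse)
qed auto

lemma md_ax: "(s,t)\<in>Md \<Longrightarrow> a = subst \<sigma> s \<Longrightarrow> b = subst \<sigma> t \<Longrightarrow> derivable Md a b"
  using derivable.ax by blast

lemma d_passoc: "derivable Md (Plus (Plus a b) c) (Plus a (Plus b c))"
  by (rule md_ax[where \<sigma>="\<lambda>n. if n = 0 then a else if n = 1 then b else c" and s="Plus (Plus (Var 0) (Var 1)) (Var 2)" and t="Plus (Var 0) (Plus (Var 1) (Var 2))"]) (auto simp: Md_def Let_def)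

lemma d_pcomm: "derivable Md (Plus a b) (Plus b a)"
  by (rule md_ax[where \<sigma>="\<lambda>n. if n = 0 then a else b" and s="Plus (Var 0) (Var 1)" and t="Plus (Var 1) (Var 0)"]) (auto simp: Md_def Let_def)

lemma d_p0: "derivable Md (Plus a Zero) (a)"
  by (rule md_ax[where \<sigma>="\<lambda>n. a" and s="Plus (Var 0) Zero" and t="Var 0"]) (auto simp: Md_def Let_def)

lemma d_pneg: "derivable Md (Plus a (Neg a)) (Zero)"
  by (rule md_ax[where \<sigma>="\<lambda>n. a" and s="Plus (Var 0) (Neg (Var 0))" and t="Zero"]) (auto simp: Md_def Let_def)

lemma d_tassoc: "derivable Md (Times (Times a b) c) (Times a (Times b c))"
  by (rule md_ax[where \<sigma>="\<lambda>n. if n = 0 then a else if n = 1 then b else c" and s="Times (Times (Var 0) (Var 1)) (Var 2)" and t="Times (Var 0) (Times (Var 1) (Var 2))"]) (auto simp: Md_def Let_def)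

lemma d_tcomm: "derivable Md (Times a b) (Times b a)"
  by (rule md_ax[where \<sigma>="\<lambda>n. if n = 0 then a else b" and s="Times (Var 0) (Var 1)" and t="Times (Var 1) (Var 0)"]) (auto simp: Md_def Let_def)

lemma d_t1: "derivable Md (Times One a) (a)"
  by (rule md_ax[where \<sigma>="\<lambda>n. a" and s="Times One (Var 0)" and t="Var 0"]) (auto simp: Md_def Let_def)

lemma d_dist: "derivable Md (Times a (Plus b c)) (Plus (Times a b) (Times a c))"
  by (rule md_ax[where \<sigma>="\<lambda>n. if n = 0 then a else if n = 1 then b else c" and s="Times (Var 0) (Plus (Var 1) (Var 2))" and t="Plus (Times (Var 0) (Var 1)) (Times (Var 0) (Var 2))"]) (auto simp: Md_def Let_def)

lemma d_ii: "derivable Md (Inv (Inv a)) (a)"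
  by (rule md_ax[where \<sigma>="\<lambda>n. a" and s="Inv (Inv (Var 0))" and t="Var 0"]) (auto simp: Md_def Let_def)

lemma d_iax: "derivable Md (Times a (Times a (Inv a))) (a)"
  by (rule md_ax[where \<sigma>="\<lambda>n. a" and s="Times (Var 0) (Times (Var 0) (Inv (Var 0)))" and t="Var 0"]) (auto simp: Md_def Let_def)

quotient_type q = trm / "derivable Md"
  by (rule equivp_der)

instantiation q :: comm_ring_1
begin
lift_definition zero_q :: q is Zero .
lift_definition one_q :: q is One .
lift_definition plus_q :: "q \<Rightarrow> q \<Rightarrow> q" is Plus by (rule derivable.cong_plus)
lift_definition times_q :: "q \<Rightarrow> q \<Rightarrow> q" is Times by (rule derivable.cong_times)
lift_definition uminus_q :: "q \<Rightarrow> q" is Neg by (rule derivable.cong_neg)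
definition minus_q :: "q \<Rightarrow> q \<Rightarrow> q" where "minus_q a b = a + - b"
instance
proof
  fix a b c :: q
  have pc: "\<And>x y :: q. x + y = y + x" by transfer (rule d_pcomm)
  have tc: "\<And>x y :: q. x * y = y * x" by transfer (rule d_tcomm)
  show "a + b + c = a + (b + c)" by transfer (rule d_passoc)
  show "a + b = b + a" by (rule pc)
  have "a + 0 = a" by transfer (rule d_p0)
  then show "0 + a = a" using pc by metis
  have "a + - a = 0" by transfer (rule d_pneg)
  then show "- a + a = 0" using pc by metis
  show "a - b = a + - b" by (simp add: minus_q_def)
  show "a * b * c = a * (b * c)" by transfer (rule d_tassoc)
  show "a * b = b * a" by (rule tc)
  show "1 * a = a" by transfer (rule d_t1)
  have "c * (a + b) = c * a + c * b" by transfer (rule d_dist)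
  then show "(a + b) * c = a * c + b * c" using tc by metis
  show "(0::q) \<noteq> 1"
  proof transfer
    show "\<not> derivable Md Zero One" using sound[of Zero One "\<lambda>_. 0"] by auto
  qed
qed
end

lift_definition iv :: "q \<Rightarrow> q" is Inv by (rule derivable.cong_inv)

lemma iv_iv: "iv (iv a) = a"
  by transfer (rule d_ii)

lemma iv_ax: "a * (a * iv a) = a"
  by transfer (rule d_iax)

lemma iv2: "iv a = iv a * (iv a * a)"
  using iv_ax[of "iv a"] by (simp add: iv_iv)

lemma weak_unique:
  fixes a b c :: q
  assumes "a * b * a = a" "b * a * b = b" "a * c * a = a" "c * a * c = c"
  shows "b = c"
proof -
  have "a * b = a * c * a * b" using assms(3) by simp
  also have "\<dots> = a * c * (a * b)" by (simp add: mult.assoc)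
  finally have 1: "a * b = a * c * (a * b)" .
  have "a * c = a * b * a * c" using assms(1) by simp
  also have "\<dots> = a * b * (a * c)" by (simp add: mult.assoc)
  finally have 2: "a * c = a * b * (a * c)" .
  have ab: "a * b = a * c" using 1 2 by (simp add: mult.commute)
  have "b = b * a * b" using assms(2) by simp
  also have "\<dots> = b * (a * c)" using ab by (simp add: mult.assoc)
  also have "\<dots> = a * b * c" by (simp add: ac_simps)
  also have "\<dots> = a * c * c" using ab by simp
  also have "\<dots> = c * a * c" by (simp add: mult.commute)
  finally show ?thesis using assms(4) by simp
qed

lemma iv_mult: "iv (a * b) = iv a * iv b"
proof (rule weak_unique[of "a * b"])
  have A: "\<And>x. x * iv x * x = x" using iv_ax by (metis mult.assoc mult.commute)
  have B: "\<And>x. iv x * x * iv x = iv x" using iv2 by (metis mult.assoc mult.commute)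
  show "a * b * iv (a * b) * (a * b) = a * b" by (rule A)
  show "iv (a * b) * (a * b) * iv (a * b) = iv (a * b)" by (rule B)
  have "a * b * (iv a * iv b) * (a * b) = (a * iv a * a) * (b * iv b * b)" by (simp add: ac_simps)
  then show "a * b * (iv a * iv b) * (a * b) = a * b" using A by simp
  have "iv a * iv b * (a * b) * (iv a * iv b) = (iv a * a * iv a) * (iv b * b * iv b)" by (simp add: ac_simps)
  then show "iv a * iv b * (a * b) * (iv a * iv b) = iv a * iv b" using B by simp
qed

lemma iv_idem: assumes "e * e = e" shows "iv e = e"
proof (rule weak_unique[of e])
  show "e * iv e * e = e" using iv_ax by (metis mult.assoc mult.commute)
  show "iv e * e * iv e = iv e" using iv2 by (metis mult.assoc mult.commute)
  show "e * e * e = e" using assms by simp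
  show "e * e * e = e" using assms by simp
qed

lemma key_inv: assumes "e * e = e" shows "e * iv (e * x) = e * iv x"
  using assms by (simp add: iv_mult iv_idem mult.assoc[symmetric])

lemma prop_q:
  assumes idem: "abs_q e * abs_q e = abs_q e"
  shows "abs_q e * abs_q (fill C r) = abs_q e * abs_q (fill C (Times e r))"
proof (induction C arbitrary: r)
  case Hole
  then show ?case using idem by (simp add: times_q.abs_eq[symmetric] mult.assoc[symmetric])
next
  case (PlusL C b)
  then show ?case by (simp add: plus_q.abs_eq[symmetric] distrib_left)
next
  case (PlusR a C)
  then show ?case by (simp add: plus_q.abs_eq[symmetric] distrib_left)
next
  case (TimesL C b)
  then show ?case by (simp add: times_q.abs_eq[symmetric] mult.assoc[symmetric])
next
  case (TimesR a C)
  then show ?case by (metis fill.simps(5) times_q.abs_eq mult.left_commute)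
next
  case (NegC C)
  then show ?case by (simp add: uminus_q.abs_eq[symmetric])
next
  case (InvC C)
  have "abs_q e * iv (abs_q (fill C r)) = abs_q e * iv (abs_q e * abs_q (fill C r))"
    using key_inv[OF idem] by simp
  also have "\<dots> = abs_q e * iv (abs_q e * abs_q (fill C (Times e r)))" using InvC by simp
  also have "\<dots> = abs_q e * iv (abs_q (fill C (Times e r)))" using key_inv[OF idem] by simp
  finally show ?case by (simp add: iv.abs_eq[symmetric])
qed

lemma prop_der:
  assumes "abs_q e * abs_q e = abs_q e"
  shows "derivable Md (Times e (fill C r)) (Times e (fill C (Times e r)))"
  using prop_q[OF assms, of C r] by (simp add: times_q.abs_eq q.abs_eq_iff)

theorem mainTheorem7:
  shows "\<forall>t r C.
    derivable Md (Times (one_of t) (fill C r)) (Times (one_of t) (fill C (Times (one_of t) r))) \<and>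
    derivable Md (Times (zero_of t) (fill C r)) (Times (zero_of t) (fill C (Times (zero_of t) r)))"
proof (intro allI conjI)
  fix t r C
  let ?u = "abs_q t * iv (abs_q t)"
  have u: "abs_q (one_of t) = ?u" by (simp add: one_of_def times_q.abs_eq iv.abs_eq)
  have ui: "?u * ?u = ?u"
  proof -
    have "?u * ?u = (abs_q t * (abs_q t * iv (abs_q t))) * iv (abs_q t)" by (simp add: ac_simps)
    then show ?thesis by (simp add: iv_ax)
  qed
  have z: "abs_q (zero_of t) = 1 - ?u"
    by (simp add: zero_of_def u[symmetric] plus_q.abs_eq[symmetric] uminus_q.abs_eq[symmetric] one_q.abs_eq)
  have zi: "(1 - ?u) * (1 - ?u) = 1 - ?u"
    using ui by (simp add: algebra_simps)
  show "derivable Md (Times (one_of t) (fill C r)) (Times (one_of t) (fill C (Times (one_of t) r)))"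
    by (rule prop_der) (simp add: u ui)
  show "derivable Md (Times (zero_of t) (fill C r)) (Times (zero_of t) (fill C (Times (zero_of t) r)))"
    by (rule prop_der) (simp add: z zi)
qed

end
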